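(* Let $\mathbf{I}$ be countable and consider the Galves–Löcherbach process with saturation thresholds, i.e. the time homogeneous counting process with generic intensities $$\phi^i(x)=\psi^i\Big(\sum_{j\in\mathbf{I}}\big(\beta^i_j\,Z^j((-a^i(x),0))\big)\wedge K^i_j\Big),$$ where $\psi^i:\mathbb{R}\to\mathbb{R}_+$ is Lipschitz continuous and non-decreasing, $\beta^i_j\ge0$ with $\beta^i_i=0$, $K^i_j\ge0$, $a^i(x)=-\sup\{t^i_k\in x:t^i_k<0\}$ ($+\infty$ if there is no such point), and $Z^j((-a,0))$ is the number of points of index $j$ of $x$ in $(-a,0)$. Suppose $\sup_{i\in\mathbf{I}}\sum_{j\in\mathbf{I}}K^i_j<\infty$. Fix $\delta>0$, for each $i$ let $(\omega^i_k)_{k\ge1}$ be subsets of $\mathbf{I}$ with $\omega^i_1=\{i\}$, $\omega^i_k\subset\omega^i_{k+1}$, $\bigcup_k\omega^i_k=\mathbf{I}$, put $\omega^i_0=\emptyset$, $v^i_0=\emptyset$, $v^i_k=\omega^i_k\times[-k\delta,0)$ for $k\ge1$, and $\mathbf{V}^i=\{v^i_k:k\ge0\}$. Define $\Delta^i_0(x)=\psi^i(0)$ and for $k\ge1$ $$\Delta^i_k(x)=\Delta^i_{v^i_k}(x)=\psi^i\Big(\sum_{j\in\omega^i_k}\Big[\beta^i_j\int_{-(k\delta)\wedge a^i(x)}^0dx^j_s\Big]\wedge K^i_j\Big)-\psi^i\Big(\sum_{j\in\omega^i_{k-1}}\Big[\beta^i_j\int_{-((k-1)\delta)\wedge a^i(x)}^0dx^j_s\Big]\wedge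 K^i_j\Big).$$ Then for any probabilities $\lambda^i$ on $\mathbf{V}^i$ with $\lambda^i(v)=0$ only if $\sup_{x\in\mathcal{X}}\Delta^i_v(x)=0$, the process admits the Kalikow decomposition with respect to $(\mathbf{V}^i)_{i\in\mathbf{I}}$ and the subspace $\mathcal{Y}=\mathcal{X}$, with weights $\lambda^i(v)$ and $\phi^i_v=\Delta^i_v/\lambda^i(v)$ (convention $0/0=0$).
   Context: $\mathcal{X}$ is the set of configurations $x=(\{t^i_n\}_n)_{i\in\mathbf{I}}$ of locally finite point sets in $(-\infty,0)$, $dx^j_s=\sum_n\delta_{t^j_n}(ds)$, and $\int_a^b$ means integration over $[a,b)$. A neighborhood is a Borel subset $v\subset\mathbf{I}\times(-\infty,0)$; $f$ is cylindrical on $v$ if $f(x)=f(y)$ whenever $x,y$ have the same points in $v$. A time homogeneous counting process with generic intensity $\phi^i:\mathcal{X}\to\mathbb{R}_+$ has stochastic intensity at time $t$ equal to $\phi^i$ of the past configuration before $t$ shifted so that $t$ becomes $0$. Kalikow decomposition w.r.t. $(\mathbf{V}^i)$ and $\mathcal{Y}$: for each $i$ a probability $\lambda^i$ on $\mathbf{V}^i$ and functions $\phi^i_v\ge0$ cylindrical on $v$ with $\phi^i(x)=\sum_{v\in\mathbf{V}^i}\lambda^i(v)\phi^i_v(x)$ for all $x\in\mathcal{X}\cap\mathcal{Y}$. *)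

theory Defs
  imports "HOL-Analysis.Analysis"
begin

text \<open>A configuration is a family of point sets indexed by \<open>'i\<close>; point \<open>t\<close> of
  index \<open>j\<close> corresponds to \<open>t \<in> x j\<close>.\<close>

definition configs :: "('i \<Rightarrow> real set) set" where
  "configs = {x. (\<forall>i. x i \<subseteq> {..<0} \<and>
                   (\<forall>C. compact C \<and> C \<subseteq> {..<0} \<longrightarrow> finite (x i \<inter> C)))
               \<and> (\<forall>i j. i \<noteq> j \<longrightarrow> x i \<inter> x j = {})}"

definition ecard :: "'a set \<Rightarrow> ennreal" where
  "ecard S = (if finite S then of_nat (card S) else \<infinity>)"

definition age :: "('i \<Rightarrow> real set) \<Rightarrow> 'i \<Rightarrow> ereal" where
  "age x i = (if x i = {} then \<infinity> else ereal (- Sup (x i)))"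

text \<open>Saturated term \<open>(b * n) \<wedge> K\<close> (with \<open>0 * \<infinity> = 0\<close>).\<close>
definition sat :: "real \<Rightarrow> ennreal \<Rightarrow> real \<Rightarrow> real" where
  "sat b n K = enn2real (min (ennreal b * n) (ennreal K))"

definition GL_intensity ::
  "('i \<Rightarrow> real \<Rightarrow> real) \<Rightarrow> ('i \<Rightarrow> 'i \<Rightarrow> real) \<Rightarrow> ('i \<Rightarrow> 'i \<Rightarrow> real)
   \<Rightarrow> 'i \<Rightarrow> ('i \<Rightarrow> real set) \<Rightarrow> real" where
  "GL_intensity psi beta K i x =
     psi i (infsum (\<lambda>j. sat (beta i j)
               (ecard {t \<in> x j. - age x i < ereal t \<and> t < 0}) (K i j)) UNIV)"

definition omz :: "('i \<Rightarrow> nat \<Rightarrow> 'i set) \<Rightarrow> 'i \<Rightarrow> nat \<Rightarrow> 'i set" where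
  "omz om i k = (if k = 0 then {} else om i k)"

text \<open>\<open>\<Sum>_{j \<in> \<omega>^i_k} [\<beta>^i_j \<integral>_{-(k\<delta>) \<and> a^i(x)}^0 dx^j_s] \<and> K^i_j\<close>
  (integration over \<open>[-(k\<delta>) \<and> a^i(x), 0)\<close>).\<close>
definition GL_partial ::
  "('i \<Rightarrow> 'i \<Rightarrow> real) \<Rightarrow> ('i \<Rightarrow> 'i \<Rightarrow> real) \<Rightarrow> real \<Rightarrow> ('i \<Rightarrow> nat \<Rightarrow> 'i set)
   \<Rightarrow> 'i \<Rightarrow> nat \<Rightarrow> ('i \<Rightarrow> real set) \<Rightarrow> real" where
  "GL_partial beta K delta om i k x =
     infsum (\<lambda>j. sat (beta i j)
        (ecard {t \<in> x j. - min (ereal (real k * delta)) (age x i) \<le> ereal t \<and> t < 0})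
        (K i j)) (omz om i k)"

definition GL_Delta ::
  "('i \<Rightarrow> real \<Rightarrow> real) \<Rightarrow> ('i \<Rightarrow> 'i \<Rightarrow> real) \<Rightarrow> ('i \<Rightarrow> 'i \<Rightarrow> real) \<Rightarrow> real
   \<Rightarrow> ('i \<Rightarrow> nat \<Rightarrow> 'i set) \<Rightarrow> 'i \<Rightarrow> nat \<Rightarrow> ('i \<Rightarrow> real set) \<Rightarrow> real" where
  "GL_Delta psi beta K delta om i k x =
     (if k = 0 then psi i 0
      else psi i (GL_partial beta K delta om i k x) - psi i (GL_partial beta K delta om i (k - 1) x))"

definition nbhd :: "real \<Rightarrow> ('i \<Rightarrow> nat \<Rightarrow> 'i set) \<Rightarrow> 'i \<Rightarrow> nat \<Rightarrow> ('i \<times> real) set" where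
  "nbhd delta om i k = (if k = 0 then {} else om i k \<times> {- (real k * delta)..<0})"

definition nbhds :: "real \<Rightarrow> ('i \<Rightarrow> nat \<Rightarrow> 'i set) \<Rightarrow> 'i \<Rightarrow> ('i \<times> real) set set" where
  "nbhds delta om i = range (nbhd delta om i)"

definition GL_DeltaV ::
  "('i \<Rightarrow> real \<Rightarrow> real) \<Rightarrow> ('i \<Rightarrow> 'i \<Rightarrow> real) \<Rightarrow> ('i \<Rightarrow> 'i \<Rightarrow> real) \<Rightarrow> real
   \<Rightarrow> ('i \<Rightarrow> nat \<Rightarrow> 'i set) \<Rightarrow> 'i \<Rightarrow> ('i \<times> real) set \<Rightarrow> ('i \<Rightarrow> real set) \<Rightarrow> real" where
  "GL_DeltaV psi beta K delta om i v x =
     GL_Delta psi beta K delta om i (THE k. v = nbhd delta om i k) x"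

definition cylindrical :: "('i \<Rightarrow> real set) set \<Rightarrow> ('i \<times> real) set \<Rightarrow> (('i \<Rightarrow> real set) \<Rightarrow> real) \<Rightarrow> bool" where
  "cylindrical XX v f \<longleftrightarrow>
     (\<forall>x\<in>XX. \<forall>y\<in>XX. (\<forall>j t. (j, t) \<in> v \<longrightarrow> (t \<in> x j \<longleftrightarrow> t \<in> y j)) \<longrightarrow> f x = f y)"

definition kalikow_decomp ::
  "('i \<Rightarrow> real set) set \<Rightarrow> ('i \<Rightarrow> ('i \<times> real) set set) \<Rightarrow> ('i \<Rightarrow> real set) set
   \<Rightarrow> ('i \<Rightarrow> ('i \<Rightarrow> real set) \<Rightarrow> real) \<Rightarrow> ('i \<Rightarrow> ('i \<times> real) set \<Rightarrow> real)
   \<Rightarrow> ('i \<Rightarrow> ('i \<times> real) set \<Rightarrow> ('i \<Rightarrow> real set) \<Rightarrow> real) \<Rightarrow> bool" where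
  "kalikow_decomp XX V Y phi lam phiv \<longleftrightarrow>
     (\<forall>i. (\<forall>v\<in>V i. lam i v \<ge> 0) \<and> (lam i has_sum 1) (V i)
        \<and> (\<forall>v\<in>V i. (\<forall>x\<in>XX. phiv i v x \<ge> 0) \<and> cylindrical XX v (phiv i v))
        \<and> (\<forall>x\<in>XX \<inter> Y. ((\<lambda>v. lam i v * phiv i v x) has_sum phi i x) (V i)))"

end

theory Submission
  imports Defs
begin

lemma ecard_eq: "ecard S = emeasure (count_space UNIV) S"
  by (simp add: ecard_def emeasure_count_space)

lemma ecard_mono: "A \<subseteq> B \<Longrightarrow> ecard A \<le> ecard B"
  unfolding ecard_eq by (rule emeasure_mono) auto

lemma sat_nonneg: "0 \<le> sat b n K"
  by (simp add: sat_def)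

lemma sat_le: "0 \<le> K \<Longrightarrow> sat b n K \<le> K"
proof -
  assume "0 \<le> K"
  have "enn2real (min (ennreal b * n) (ennreal K)) \<le> enn2real (ennreal K)"
    by (rule enn2real_mono) auto
  then show ?thesis using \<open>0 \<le> K\<close> by (simp add: sat_def)
qed

lemma sat_mono: "n \<le> m \<Longrightarrow> sat b n K \<le> sat b m K"
  unfolding sat_def
proof (rule enn2real_mono)
  assume "n \<le> m"
  then show "min (ennreal b * n) (ennreal K) \<le> min (ennreal b * m) (ennreal K)"
    by (intro min.mono mult_left_mono) auto
  show "min (ennreal b * m) (ennreal K) < top" by (simp add: min.strict_coboundedI2)
qed

lemma sat_zero: "sat 0 n K = 0"
  by (simp add: sat_def)

lemma min_age:
  assumes sub: "x i \<subseteq> {..<0}" and c: "0 \<le> c'" "c' \<le> c"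
  shows "min (ereal c') (age x i) =
    (if x i \<inter> {-c..<0} = {} then ereal c' else min (ereal c') (ereal (- Sup (x i \<inter> {-c..<0}))))"
proof (cases "x i \<inter> {-c..<0} = {}")
  case True
  show ?thesis
  proof (cases "x i = {}")
    case True then show ?thesis by (simp add: age_def)
  next
    case False
    have "\<forall>t\<in>x i. t \<le> -c" using \<open>x i \<inter> {-c..<0} = {}\<close> sub by force
    then have "Sup (x i) \<le> -c" using False by (intro cSup_least) auto
    then have "ereal c' \<le> age x i" using False c by (simp add: age_def)
    then show ?thesis using True by simp
  qed
next
  case neA: False
  let ?A = "x i \<inter> {-c..<0}"
  have bdd: "bdd_above (x i)" using sub by (meson bdd_above_Iio bdd_above_mono)
  have ne: "x i \<noteq> {}" using neA by auto
  have "Sup ?A \<le> Sup (x i)" using neA bdd by (intro cSup_subset_mono) auto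
  moreover have "Sup (x i) \<le> Sup ?A"
  proof (rule cSup_least[OF ne])
    fix t assume t: "t \<in> x i"
    have "?A \<subseteq> {..<0}" by auto
    then have bddA: "bdd_above ?A" by (meson bdd_above_Iio bdd_above_mono)
    show "t \<le> Sup ?A"
    proof (cases "t \<in> ?A")
      case True then show ?thesis using bddA by (intro cSup_upper)
    next
      case F: False
      obtain a where a: "a \<in> ?A" using neA by blast
      have "t < -c" using F t sub by force
      also have "-c \<le> a" using a by auto
      also have "a \<le> Sup ?A" using a bddA by (intro cSup_upper)
      finally show ?thesis by simp
    qed
  qed
  ultimately have "Sup (x i) = Sup ?A" by simp
  then show ?thesis using neA ne by (simp add: age_def)
qed

lemma sup_in:
  assumes x: "x \<in> configs" and ne: "x i \<noteq> {}" and neg: "Sup (x i) < 0"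
  shows "Sup (x i) \<in> x i"
proof -
  let ?s = "Sup (x i)"
  have sub: "x i \<subseteq> {..<0}" using x by (auto simp: configs_def)
  have bdd: "bdd_above (x i)" using sub by (meson bdd_above_Iio bdd_above_mono)
  let ?F = "x i \<inter> {?s-1..?s}"
  have "compact {?s-1..?s}" "{?s-1..?s} \<subseteq> {..<0}" using neg by auto
  then have "finite ?F" using x unfolding configs_def by blast
  obtain y where y: "y \<in> x i" "?s - 1 < y" using less_cSup_iff[OF ne bdd, of "?s - 1"] by auto
  have ys: "y \<le> ?s" using y bdd by (intro cSup_upper)
  have yF: "y \<in> ?F" using y ys by auto
  define m where "m = Max ?F"
  have mF: "m \<in> ?F" unfolding m_def using \<open>finite ?F\<close> yF by (intro Max_in) auto
  have "?s \<le> m"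
  proof (rule cSup_least[OF ne])
    fix z assume z: "z \<in> x i"
    show "z \<le> m"
    proof (cases "?s - 1 \<le> z")
      case True
      then have "z \<in> ?F" using z bdd cSup_upper by auto
      then show ?thesis unfolding m_def using \<open>finite ?F\<close> by simp
    next
      case False
      then have "z < y" using y by simp
      also have "y \<le> m" unfolding m_def using \<open>finite ?F\<close> yF by simp
      finally show ?thesis by simp
    qed
  qed
  moreover have "m \<le> ?s" using mF by auto
  ultimately show ?thesis using mF by (metis IntD1 order.antisym)
qed


theorem mainTheorem5:
  fixes psi :: "'i::countable \<Rightarrow> real \<Rightarrow> real"
    and beta K :: "'i \<Rightarrow> 'i \<Rightarrow> real"
    and delta :: real
    and om :: "'i \<Rightarrow> nat \<Rightarrow> 'i set"
    and lam :: "'i \<Rightarrow> ('i \<times> real) set \<Rightarrow> real"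
  assumes psi_nonneg: "\<forall>i u. psi i u \<ge> 0"
    and psi_lip: "\<forall>i. \<exists>C. C-lipschitz_on UNIV (psi i)"
    and psi_mono: "\<forall>i. mono (psi i)"
    and beta_nonneg: "\<forall>i j. beta i j \<ge> 0"
    and beta_diag: "\<forall>i. beta i i = 0"
    and K_nonneg: "\<forall>i j. K i j \<ge> 0"
    and K_sum: "\<exists>B. \<forall>i. K i summable_on UNIV \<and> infsum (K i) UNIV \<le> B"
    and delta_pos: "delta > 0"
    and om_1: "\<forall>i. om i 1 = {i}"
    and om_mono: "\<forall>i k. k \<ge> 1 \<longrightarrow> om i k \<subseteq> om i (Suc k)"
    and om_union: "\<forall>i. (\<Union>k\<in>{1..}. om i k) = UNIV"
    and lam_prob: "\<forall>i. (\<forall>v\<in>nbhds delta om i. lam i v \<ge> 0) \<and> (lam i has_sum 1) (nbhds delta om i)"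
    and lam_zero: "\<forall>i. \<forall>v\<in>nbhds delta om i. lam i v = 0 \<longrightarrow>
                     (SUP x\<in>configs. GL_DeltaV psi beta K delta om i v x) = 0"
  shows "kalikow_decomp configs (nbhds delta om) configs (GL_intensity psi beta K) lam
           (\<lambda>i v x. GL_DeltaV psi beta K delta om i v x / lam i v)"
proof -
  define P where "P i k y = GL_partial beta K delta om i k y" for i k y
  define D where "D i k y = GL_Delta psi beta K delta om i k y" for i k y
  have om_in: "om i k \<subseteq> om i m" if "1 \<le> k" "k \<le> m" for i k m
    using that(2,1)
  proof (induction m rule: dec_induct)
    case (step n)
    then have "om i n \<subseteq> om i (Suc n)" using om_mono by auto
    with step show ?case by auto
  qed auto
  have i_in: "i \<in> om i k" if "1 \<le> k" for i k
    using om_in[OF order_refl that, of i] om_1 by auto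
  have omz_sub: "omz om i m \<subseteq> om i k" if "m \<le> k" for i m k
    using om_in[of m k i] that by (auto simp: omz_def)
  have omz_mono: "omz om i (k - 1) \<subseteq> omz om i k" for i k
    using om_in[of "k - 1" k i] by (auto simp: omz_def)
  have nb_ne: "nbhd delta om i k \<noteq> nbhd delta om i m" if "k < m" for i k m
  proof -
    have "(i, - (real m * delta)) \<in> nbhd delta om i m"
      using that i_in[of m i] delta_pos by (auto simp: nbhd_def)
    moreover have "(i, - (real m * delta)) \<notin> nbhd delta om i k"
      using that delta_pos by (auto simp: nbhd_def)
    ultimately show ?thesis by blast
  qed
  have nb_inj: "inj (nbhd delta om i)" for i
    by (rule injI) (metis nb_ne linorder_neqE_nat)
  have DV: "GL_DeltaV psi beta K delta om i (nbhd delta om i k) y = D i k y" for i k y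
  proof -
    have "(THE m. nbhd delta om i k = nbhd delta om i m) = k"
      using nb_inj[of i] by (intro the_equality) (auto dest: injD)
    then show ?thesis by (simp add: GL_DeltaV_def D_def)
  qed
  have Ksumm: "K i summable_on UNIV" for i using K_sum by blast
  have sat_summ: "(\<lambda>j. sat (beta i j) (N j) (K i j)) summable_on A" for i N A
    by (rule summable_on_comparison_test[OF summable_on_subset_banach[OF Ksumm[of i]]])
       (auto simp: sat_le sat_nonneg K_nonneg)
  have P_nonneg: "0 \<le> P i k y" for i k y
    unfolding P_def GL_partial_def by (intro infsum_nonneg) (auto simp: sat_nonneg)
  have P_le: "P i k y \<le> infsum (K i) UNIV" for i k y
    unfolding P_def GL_partial_def
    by (rule infsum_mono_neutral[OF sat_summ Ksumm]) (auto simp: sat_le K_nonneg)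
  have P_mono: "P i (k - 1) y \<le> P i k y" for i k y
    unfolding P_def GL_partial_def
  proof (rule infsum_mono_neutral[OF sat_summ sat_summ])
    fix j
    have "- min (ereal (real k * delta)) (age y i) \<le> - min (ereal (real (k - 1) * delta)) (age y i)"
    proof -
      have "real (k - 1) * delta \<le> real k * delta" using delta_pos by (intro mult_right_mono) auto
      then have "min (ereal (real (k - 1) * delta)) (age y i) \<le> min (ereal (real k * delta)) (age y i)"
        by (intro min.mono) auto
      then show ?thesis by simp
    qed
    then have "{t \<in> y j. - min (ereal (real (k - 1) * delta)) (age y i) \<le> ereal t \<and> t < 0}
      \<subseteq> {t \<in> y j. - min (ereal (real k * delta)) (age y i) \<le> ereal t \<and> t < 0}"
      using order_trans by blast
    then show "sat (beta i j) (ecard {t \<in> y j. - min (ereal (real (k - 1) * delta)) (age y i) \<le> ereal t \<and> t < 0}) (K i j)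
      \<le> sat (beta i j) (ecard {t \<in> y j. - min (ereal (real k * delta)) (age y i) \<le> ereal t \<and> t < 0}) (K i j)"
      by (intro sat_mono ecard_mono)
  qed (use omz_mono in \<open>auto simp: sat_nonneg\<close>)
  have P0: "P i 0 y = 0" for i y
    by (simp add: P_def GL_partial_def omz_def)
  have D_alt: "D i k y = (if k = 0 then psi i 0 else psi i (P i k y) - psi i (P i (k - 1) y))" for i k y
    by (simp add: D_def P_def GL_Delta_def)
  have D_nonneg: "0 \<le> D i k y" for i k y
    using psi_nonneg psi_mono P_mono[of i k y] unfolding D_alt
    by (auto simp: mono_def)
  have D_le: "D i k y \<le> psi i (infsum (K i) UNIV)" for i k y
  proof -
    have "0 \<le> infsum (K i) UNIV" using K_nonneg by (intro infsum_nonneg) auto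
    then have a: "psi i 0 \<le> psi i (infsum (K i) UNIV)" using psi_mono by (auto simp: mono_def)
    have b: "psi i (P i k y) \<le> psi i (infsum (K i) UNIV)" using P_le psi_mono by (auto simp: mono_def)
    show ?thesis unfolding D_alt using a b psi_nonneg by (smt (verit))
  qed
  have tele: "(\<Sum>k<Suc n. D i k y) = psi i (P i n y)" for i n y
    by (induction n) (auto simp: D_alt P0)
  have P_cyl: "P i m x = P i m y"
    if x: "x \<in> configs" and y: "y \<in> configs" and mk: "m \<le> k" and k1: "1 \<le> k"
      and H: "\<forall>j t. (j, t) \<in> nbhd delta om i k \<longrightarrow> (t \<in> x j \<longleftrightarrow> t \<in> y j)" for i m k x y
  proof -
    have Hk: "t \<in> x j \<longleftrightarrow> t \<in> y j" if "j \<in> om i k" "- (real k * delta) \<le> t" "t < 0" for j t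
      using H that k1 by (auto simp: nbhd_def)
    have xi: "x i \<inter> {- (real k * delta)..<0} = y i \<inter> {- (real k * delta)..<0}"
      using Hk[OF i_in[OF k1]] by auto
    have subx: "x i \<subseteq> {..<0}" using x by (auto simp: configs_def)
    have suby: "y i \<subseteq> {..<0}" using y by (auto simp: configs_def)
    have cm: "0 \<le> real m * delta" "real m * delta \<le> real k * delta"
      using delta_pos mk by (auto intro: mult_right_mono)
    have ages: "min (ereal (real m * delta)) (age x i) = min (ereal (real m * delta)) (age y i)"
      using min_age[of x i, OF subx cm] min_age[of y i, OF suby cm] xi by simp
    show ?thesis unfolding P_def GL_partial_def
    proof (rule infsum_cong)
      fix j assume j: "j \<in> omz om i m"
      then have jk: "j \<in> om i k" using omz_sub[OF mk] by auto
      have "{t \<in> x j. - min (ereal (real m * delta)) (age x i) \<le> ereal t \<and> t < 0} =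
            {t \<in> y j. - min (ereal (real m * delta)) (age y i) \<le> ereal t \<and> t < 0}"
      proof -
        have lb: "- (real k * delta) \<le> t" if "- min (ereal (real m * delta)) (age y i) \<le> ereal t" for t
        proof -
          have "- ereal (real m * delta) \<le> - min (ereal (real m * delta)) (age y i)" by (metis ereal_minus_le_minus min.cobounded1)
          with that have "ereal (- (real m * delta)) \<le> ereal t" by (metis order_trans uminus_ereal.simps(1))
          then show ?thesis using cm by simp
        qed
        show ?thesis unfolding ages using lb Hk[OF jk] by blast
      qed
      then show "sat (beta i j) (ecard {t \<in> x j. - min (ereal (real m * delta)) (age x i) \<le> ereal t \<and> t < 0}) (K i j) =
            sat (beta i j) (ecard {t \<in> y j. - min (ereal (real m * delta)) (age y i) \<le> ereal t \<and> t < 0}) (K i j)"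
        by simp
    qed
  qed
  have D_cyl: "D i k x = D i k y"
    if x: "x \<in> configs" and y: "y \<in> configs"
      and H: "\<forall>j t. (j, t) \<in> nbhd delta om i k \<longrightarrow> (t \<in> x j \<longleftrightarrow> t \<in> y j)" for i k x y
  proof (cases "k = 0")
    case True then show ?thesis by (simp add: D_alt)
  next
    case False
    then have "P i k x = P i k y" "P i (k - 1) x = P i (k - 1) y"
      using P_cyl[OF x y _ _ H] by auto
    then show ?thesis by (simp add: D_alt)
  qed
  have P_lim: "(\<lambda>k. P i k y) \<longlonglongrightarrow>
      infsum (\<lambda>j. sat (beta i j) (ecard {t \<in> y j. - age y i < ereal t \<and> t < 0}) (K i j)) UNIV"
    if y: "y \<in> configs" for i y
  proof -
    define g where "g j = sat (beta i j) (ecard {t \<in> y j. - age y i < ereal t \<and> t < 0}) (K i j)" for j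
    define A where "A k j = {t \<in> y j. - min (ereal (real k * delta)) (age y i) \<le> ereal t \<and> t < 0}" for k j
    define s where "s k j = (if j \<in> omz om i k then sat (beta i j) (ecard (A k j)) (K i j) else 0)" for k j
    have Pk: "P i k y = infsum (s k) UNIV" for k
      unfolding P_def GL_partial_def s_def A_def
      by (rule infsum_cong_neutral) auto
    have lim: "(\<lambda>k. s k j) \<longlonglongrightarrow> g j" for j
    proof (cases "j = i")
      case True
      have "s k j = 0" for k using True beta_diag by (simp add: s_def sat_zero)
      moreover have "g j = 0" using True beta_diag by (simp add: g_def sat_zero)
      ultimately show ?thesis by simp
    next
      case ji: False
      obtain k0 where k0: "1 \<le> k0" "j \<in> om i k0" using om_union by blast
      have ev: "\<forall>\<^sub>F k in sequentially. sat (beta i j) (ecard (A k j)) (K i j) = s k j"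
        unfolding eventually_sequentially
        using k0 om_in[of k0 _ i] by (intro exI[of _ k0]) (auto simp: s_def omz_def)
      have inc: "incseq (\<lambda>k. A k j)"
      proof (rule incseq_SucI)
        fix k
        have "real k * delta \<le> real (Suc k) * delta" using delta_pos by (intro mult_right_mono) auto
        then have "min (ereal (real k * delta)) (age y i) \<le> min (ereal (real (Suc k) * delta)) (age y i)"
          by (intro min.mono) auto
        then have "- min (ereal (real (Suc k) * delta)) (age y i) \<le> - min (ereal (real k * delta)) (age y i)"
          by simp
        then show "A k j \<subseteq> A (Suc k) j" unfolding A_def using order_trans by blast
      qed
      have U: "(\<Union>k. A k j) = {t \<in> y j. - age y i < ereal t \<and> t < 0}"
      proof
        show "(\<Union>k. A k j) \<subseteq> {t \<in> y j. - age y i < ereal t \<and> t < 0}"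
        proof
          fix t assume "t \<in> (\<Union>k. A k j)"
          then obtain k where t: "t \<in> y j" "- min (ereal (real k * delta)) (age y i) \<le> ereal t" "t < 0"
            by (auto simp: A_def)
          have le: "- age y i \<le> ereal t"
            using t(2) by (metis ereal_minus_le_minus min.cobounded2 order_trans)
          have "- age y i \<noteq> ereal t"
          proof
            assume eq: "- age y i = ereal t"
            then have ne: "y i \<noteq> {}" by (auto simp: age_def)
            then have "age y i = ereal (- Sup (y i))" by (simp add: age_def)
            with eq have st: "Sup (y i) = t" by simp
            then have "Sup (y i) \<in> y i" using sup_in[OF y ne] t(3) by simp
            then have "t \<in> y i \<inter> y j" using st t(1) by simp
            then show False using y ji unfolding configs_def by blast
          qed
          then show "t \<in> {t \<in> y j. - age y i < ereal t \<and> t < 0}" using le t by auto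
        qed
      next
        show "{t \<in> y j. - age y i < ereal t \<and> t < 0} \<subseteq> (\<Union>k. A k j)"
        proof
          fix t assume t: "t \<in> {t \<in> y j. - age y i < ereal t \<and> t < 0}"
          obtain k where k: "- t / delta \<le> real k" using real_arch_simple by blast
          then have "- t \<le> real k * delta" using delta_pos by (simp add: field_simps)
          moreover have "ereal (- t) < age y i" using t by (metis ereal_uminus_less_reorder uminus_ereal.simps(1) mem_Collect_eq)
          ultimately have "ereal (- t) \<le> min (ereal (real k * delta)) (age y i)" by simp
          then have "- min (ereal (real k * delta)) (age y i) \<le> ereal t"
            by (metis ereal_uminus_le_reorder uminus_ereal.simps(1))
          then have "t \<in> A k j" using t by (simp add: A_def)
          then show "t \<in> (\<Union>k. A k j)" by blast
        qed
      qed
      have e: "(\<lambda>k. ecard (A k j)) \<longlonglongrightarrow> ecard {t \<in> y j. - age y i < ereal t \<and> t < 0}"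
        unfolding ecard_eq U[symmetric] by (rule Lim_emeasure_incseq[OF _ inc]) auto
      define L where "L = min (ennreal (beta i j) * ecard {t \<in> y j. - age y i < ereal t \<and> t < 0}) (ennreal (K i j))"
      have "(\<lambda>k. min (ennreal (beta i j) * ecard (A k j)) (ennreal (K i j))) \<longlonglongrightarrow> L"
        unfolding L_def by (intro tendsto_min ennreal_tendsto_cmult e tendsto_const) simp
      moreover have "L = ennreal (enn2real L)"
        unfolding L_def by (simp add: min.strict_coboundedI2)
      ultimately have "(\<lambda>k. enn2real (min (ennreal (beta i j) * ecard (A k j)) (ennreal (K i j)))) \<longlonglongrightarrow> enn2real L"
        by (intro tendsto_enn2real) auto
      then have "(\<lambda>k. sat (beta i j) (ecard (A k j)) (K i j)) \<longlonglongrightarrow> g j"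
        by (simp add: sat_def g_def L_def)
      then show ?thesis using ev by (rule Lim_transform_eventually)
    qed
    have Kint: "integrable (count_space UNIV) (K i)"
    proof -
      have "(\<lambda>x. norm (K i x)) summable_on UNIV" using Ksumm[of i] K_nonneg by simp
      then show ?thesis using abs_summable_equivalent Infinite_Set_Sum.abs_summable_on_def by blast
    qed
    have bound: "norm (s k j) \<le> K i j" for k j
      using K_nonneg by (auto simp: s_def sat_le sat_nonneg)
    have conv: "(\<lambda>k. integral\<^sup>L (count_space UNIV) (s k)) \<longlonglongrightarrow> integral\<^sup>L (count_space UNIV) g"
      and gint: "integrable (count_space UNIV) g" and sint: "\<And>k. integrable (count_space UNIV) (s k)"
      using integral_dominated_convergence[of g "count_space UNIV" s "K i"]
        integrable_dominated_convergence[of g "count_space UNIV" s "K i"]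
        integrable_dominated_convergence2[of g "count_space UNIV" s "K i"]
        Kint lim bound by auto
    have "integral\<^sup>L (count_space UNIV) (s k) = infsum (s k) UNIV" for k
      using infsetsum_infsum[of "s k" UNIV] sint[of k]
      unfolding infsetsum_def Infinite_Set_Sum.abs_summable_on_def by simp
    moreover have "integral\<^sup>L (count_space UNIV) g = infsum g UNIV"
      using infsetsum_infsum[of g UNIV] gint
      unfolding infsetsum_def Infinite_Set_Sum.abs_summable_on_def by simp
    ultimately show ?thesis using conv unfolding Pk g_def by simp
  qed
  have D_sum: "((\<lambda>k. D i k y) has_sum GL_intensity psi beta K i y) UNIV"
    if y: "y \<in> configs" for i y
  proof -
    obtain C where "C-lipschitz_on UNIV (psi i)" using psi_lip by blast
    then have "continuous_on UNIV (psi i)" by (rule lipschitz_on_continuous_on)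
    then have "(\<lambda>k. psi i (P i k y)) \<longlonglongrightarrow> GL_intensity psi beta K i y"
      unfolding GL_intensity_def
      by (intro continuous_on_tendsto_compose[OF _ P_lim[OF y]]) auto
    then have "(\<lambda>n. \<Sum>k<Suc n. D i k y) \<longlonglongrightarrow> GL_intensity psi beta K i y"
      by (simp only: tele)
    then have sm: "(\<lambda>k. D i k y) sums GL_intensity psi beta K i y"
      unfolding sums_def by (rule LIMSEQ_imp_Suc)
    have "summable (\<lambda>k. norm (D i k y))"
      using sm D_nonneg by (simp add: sums_summable)
    then show ?thesis using sm by (rule norm_summable_imp_has_sum)
  qed
  show ?thesis
    unfolding kalikow_decomp_def
  proof (intro allI conjI ballI)
    fix i
    show "(lam i has_sum 1) (nbhds delta om i)" using lam_prob by blast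
    fix v assume v: "v \<in> nbhds delta om i"
    show "0 \<le> lam i v" using lam_prob v by blast
  next
    fix i v and x :: "'i \<Rightarrow> real set" assume v: "v \<in> nbhds delta om i" and x: "x \<in> configs"
    then obtain k where k: "v = nbhd delta om i k" by (auto simp: nbhds_def)
    show "0 \<le> GL_DeltaV psi beta K delta om i v x / lam i v"
      using lam_prob v D_nonneg by (simp add: k DV)
  next
    fix i v assume v: "v \<in> nbhds delta om i"
    then obtain k where k: "v = nbhd delta om i k" by (auto simp: nbhds_def)
    show "cylindrical configs v (\<lambda>x. GL_DeltaV psi beta K delta om i v x / lam i v)"
      unfolding cylindrical_def k DV using D_cyl by metis
  next
    fix i and x :: "'i \<Rightarrow> real set" assume x: "x \<in> configs \<inter> configs"
    have eq: "lam i (nbhd delta om i k) * (GL_DeltaV psi beta K delta om i (nbhd delta om i k) x / lam i (nbhd delta om i k))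
       = D i k x" for k
    proof (cases "lam i (nbhd delta om i k) = 0")
      case True
      have "(SUP y\<in>configs. D i k y) = 0"
        using lam_zero True unfolding nbhds_def by (auto simp: DV)
      moreover have "bdd_above ((\<lambda>y. D i k y) ` configs)"
        using D_le by (intro bdd_aboveI2) auto
      ultimately have "D i k x \<le> 0" using x by (metis IntD1 cSUP_upper)
      then have "D i k x = 0" using D_nonneg by (meson order.antisym)
      then show ?thesis by (simp add: DV)
    next
      case False
      then show ?thesis by (simp add: DV)
    qed
    have "((\<lambda>v. lam i v * (GL_DeltaV psi beta K delta om i v x / lam i v)) \<circ> nbhd delta om i
        has_sum GL_intensity psi beta K i x) UNIV"
      unfolding comp_def eq using D_sum x by auto
    then show "((\<lambda>v. lam i v * (GL_DeltaV psi beta K delta om i v x / lam i v))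
        has_sum GL_intensity psi beta K i x) (nbhds delta om i)"
      unfolding nbhds_def using has_sum_reindex[OF nb_inj[of i]] by blast
  qed
qed

end
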